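(* Let $\mathcal{C}=\{C_3,C_4,C_5,\dots\}$ be the family of all cycles. For every integer $k\geq 2$, $\mathcal{E}_\mathcal{C}(k)=\mathcal{E}^*_\mathcal{C}(k)=\binom{k}{2}$, and the only multigraph $G$ (without isolated vertices) with $\operatorname{ex}(G,\mathcal{C})<k$ and $e(G)=\binom k2$ is $K_k$ (so $K_k$ is also the only extremal graph for $\mathcal{E}_\mathcal{C}(k)$).
   Context: Multigraphs are 2-uniform, may have parallel edges but no loops; $e(\cdot)$ counts edges with multiplicity. A pair of parallel edges is not a member of $\mathcal{C}$. $\operatorname{ex}(G,\mathcal{C})$ is the maximum number of edges of a sub-multigraph of $G$ containing no member of $\mathcal{C}$. $\mathcal{E}_\mathcal{C}(k):=\sup\{e(G): G\text{ simple}, \operatorname{ex}(G,\mathcal{C})<k\}$, $\mathcal{E}^*_\mathcal{C}(k):=\sup\{e(G): G\text{ multigraph}, \operatorname{ex}(G,\mathcal{C})<k\}$. Graphs have no isolated vertices. *)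

theory Defs
  imports Main "HOL-Library.Multiset" "HOL-Library.Extended_Nat"
begin

text \<open>A multigraph (no loops, parallel edges allowed, no isolated vertices) is a
finite multiset of edges, each edge a 2-element vertex set. Its vertex set is the
union of its edges, so there are no isolated vertices. e(G) is size G.\<close>

definition multigraph :: "'a set multiset \<Rightarrow> bool" where
  "multigraph G \<longleftrightarrow> (\<forall>e\<in>#G. card e = 2)"

definition simple_graph :: "'a set multiset \<Rightarrow> bool" where
  "simple_graph G \<longleftrightarrow> multigraph G \<and> (\<forall>e. count G e \<le> 1)"

definition verts :: "'a set multiset \<Rightarrow> 'a set" where
  "verts G = \<Union> (set_mset G)"

definition has_cycle :: "'a set multiset \<Rightarrow> bool" where
  "has_cycle H \<longleftrightarrow> (\<exists>vs::'a list. length vs \<ge> 3 \<and> distinct vs \<and>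
      (\<forall>i < length vs. {vs ! i, vs ! ((i + 1) mod length vs)} \<in># H))"

definition ex_cycles :: "'a set multiset \<Rightarrow> nat" where
  "ex_cycles G = Max {size H | H. H \<subseteq># G \<and> \<not> has_cycle H}"

text \<open>E_C(k) and E*_C(k); graphs taken with vertices in nat (every finite graph is
isomorphic to one such), supremum taken in the extended naturals.\<close>
definition E_cyc :: "nat \<Rightarrow> enat" where
  "E_cyc k = Sup {enat (size G) | G :: nat set multiset. simple_graph G \<and> ex_cycles G < k}"

definition E_cyc_multi :: "nat \<Rightarrow> enat" where
  "E_cyc_multi k = Sup {enat (size G) | G :: nat set multiset. multigraph G \<and> ex_cycles G < k}"

definition is_complete_graph :: "'a set multiset \<Rightarrow> nat \<Rightarrow> bool" where
  "is_complete_graph G k \<longleftrightarrow> simple_graph G \<and> card (verts G) = k \<and>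
     (\<forall>u\<in>verts G. \<forall>v\<in>verts G. u \<noteq> v \<longrightarrow> {u, v} \<in># G)"

end

theory Submission
  imports Defs
begin


lemma ex_cycles_ge:
  assumes "H \<subseteq># G" "\<not> has_cycle H" shows "size H \<le> ex_cycles G"
proof -
  have fin: "finite {size H | H. H \<subseteq># G \<and> \<not> has_cycle H}"
  proof -
    have "{size H | H. H \<subseteq># G \<and> \<not> has_cycle H} \<subseteq> {0..size G}"
      using size_mset_mono by auto
    then show ?thesis using finite_subset by blast
  qed
  have mem: "size H \<in> {size H | H. H \<subseteq># G \<and> \<not> has_cycle H}" using assms by blast
  show ?thesis unfolding ex_cycles_def by (rule Max_ge[OF fin mem])
qed

lemma no_cycle_empty: "\<not> has_cycle ({#} :: 'a set multiset)"
  unfolding has_cycle_def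
proof clarify
  fix vs :: "'a list" assume a: "3 \<le> length vs" "\<forall>i<length vs. {vs ! i, vs ! ((i + 1) mod length vs)} \<in># {#}"
  have "0 < length vs" using a(1) by linarith
  then have "{vs ! 0, vs ! ((0 + 1) mod length vs)} \<in># {#}" using a(2) by blast
  then show False by simp
qed

lemma ex_cycles_obtain: "\<exists>H. H \<subseteq># G \<and> \<not> has_cycle H \<and> size H = ex_cycles G"
proof -
  have f: "finite {size H | H. H \<subseteq># G \<and> \<not> has_cycle H}"
  proof -
    have "{size H | H. H \<subseteq># G \<and> \<not> has_cycle H} \<subseteq> {0..size G}"
      using size_mset_mono by auto
    then show ?thesis using finite_subset by blast
  qed
  have "size ({#}::'a set multiset) \<in> {size H | H. H \<subseteq># G \<and> \<not> has_cycle H}"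
    unfolding mem_Collect_eq by (intro exI[of _ "{#}"]) (simp add: no_cycle_empty)
  then have "{size H | H. H \<subseteq># G \<and> \<not> has_cycle H} \<noteq> {}" using equals0D by metis
  from Max_in[OF f this] have "ex_cycles G \<in> {size H | H. H \<subseteq># G \<and> \<not> has_cycle H}"
    unfolding ex_cycles_def .
  then show ?thesis unfolding mem_Collect_eq by metis
qed

lemma has_cycle_mono: "has_cycle H \<Longrightarrow> set_mset H \<subseteq> set_mset G \<Longrightarrow> has_cycle G"
  unfolding has_cycle_def by blast



definition ispath :: "'a set set \<Rightarrow> 'a list \<Rightarrow> bool" where
  "ispath E p \<longleftrightarrow> distinct p \<and> (\<forall>i. Suc i < length p \<longrightarrow> {p!i, p!Suc i} \<in> E)"

lemma card2_obtain: assumes "card e = 2" "x \<in> e" obtains y where "e = {x,y}" "y \<noteq> x"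
proof -
  from assms(1) obtain c d where "e = {c,d}" "c \<noteq> d" by (auto simp: card_2_iff)
  with assms(2) that show ?thesis by auto
qed

lemma leaf:
  assumes fin: "finite E" and c2: "\<forall>e\<in>E. card e = 2" and nc: "\<not> has_cycle (mset_set E)"
    and ne: "E \<noteq> {}"
  shows "\<exists>e0\<in>E. \<exists>x\<in>e0. \<forall>e\<in>E. x \<in> e \<longrightarrow> e = e0"
proof -
  from ne obtain e1 where e1: "e1 \<in> E" by auto
  then obtain a b where ab: "e1 = {a,b}" "a \<noteq> b" using c2 by (auto simp: card_2_iff)
  have memE: "e \<in># mset_set E \<longleftrightarrow> e \<in> E" for e using fin by simp
  have finU: "finite (\<Union>E)" using fin c2 by (intro finite_Union) (auto intro: card_ge_0_finite)
  define P where "P n \<longleftrightarrow> (\<exists>p. ispath E p \<and> length p = n \<and> n \<ge> 2)" for n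
  have P2: "P 2" unfolding P_def ispath_def using ab e1
    by (intro exI[of _ "[a,b]"]) (auto simp: less_Suc_eq)
  have bnd: "\<forall>y. P y \<longrightarrow> y \<le> card (\<Union>E)"
  proof (intro allI impI)
    fix y assume "P y"
    then obtain p where p: "ispath E p" "length p = y" "y \<ge> 2" unfolding P_def by auto
    have "set p \<subseteq> \<Union>E"
    proof
      fix z assume "z \<in> set p"
      then obtain i where i: "i < length p" "p!i = z" by (auto simp: in_set_conv_nth)
      show "z \<in> \<Union>E"
      proof (cases "Suc i < length p")
        case True then show ?thesis using p(1) i unfolding ispath_def by blast
      next
        case False
        then have "Suc (i - 1) < length p" "Suc (i-1) = i" using i p by auto
        then have "{p!(i-1), p!Suc (i-1)} \<in> E" using p(1) unfolding ispath_def by blast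
        moreover have "z = p!Suc (i-1)" using i \<open>Suc (i-1) = i\<close> by simp
        ultimately show ?thesis by blast
      qed
    qed
    then have "card (set p) \<le> card (\<Union>E)" using card_mono[OF finU] by blast
    moreover have "card (set p) = y" using p distinct_card[of p] unfolding ispath_def by simp
    ultimately show "y \<le> card (\<Union>E)" by simp
  qed
  from Nat.ex_has_greatest_nat[OF P2 bnd] obtain n where n: "P n" "\<forall>y. P y \<longrightarrow> y \<le> n" by blast
  then obtain p where p: "ispath E p" "length p = n" "n \<ge> 2" unfolding P_def by auto
  define x where "x = p!(n-1)"
  define u where "u = p!(n-2)"
  have e0: "{u,x} \<in> E"
  proof -
    have "Suc (n-2) < length p" "Suc (n-2) = n-1" using p by auto
    then have "{p!(n-2), p!Suc (n-2)} \<in> E" using p(1) unfolding ispath_def by blast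
    then show ?thesis unfolding x_def u_def \<open>Suc (n-2) = n-1\<close> .
  qed
  have xin: "x \<in> {u,x}" by simp
  have "\<forall>e\<in>E. x \<in> e \<longrightarrow> e = {u,x}"
  proof (intro ballI impI)
    fix e assume e: "e \<in> E" "x \<in> e"
    then obtain y where y: "e = {x,y}" "y \<noteq> x" using c2 card2_obtain[of e x] by blast
    show "e = {u,x}"
    proof (cases "y \<in> set p")
      case False
      have "ispath E (p @ [y])" unfolding ispath_def
      proof (intro conjI allI impI)
        show "distinct (p @ [y])" using p(1) False unfolding ispath_def by simp
        fix i assume i: "Suc i < length (p @ [y])"
        show "{(p @ [y]) ! i, (p @ [y]) ! Suc i} \<in> E"
        proof (cases "Suc i < n")
          case True then show ?thesis using p unfolding ispath_def by (simp add: nth_append)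
        next
          case False
          then have "i = n - 1" "Suc i = n" using i p by auto
          then show ?thesis using e y p by (simp add: nth_append x_def)
        qed
      qed
      then have "P (Suc n)" unfolding P_def using p by (intro exI[of _ "p@[y]"]) auto
      then show ?thesis using n by auto
    next
      case True
      then obtain i where i: "i < n" "p!i = y" using p by (auto simp: in_set_conv_nth)
      have "i \<noteq> n - 1" using i y x_def by auto
      show ?thesis
      proof (cases "i = n - 2")
        case True then show ?thesis using y i u_def by auto
      next
        case False
        with \<open>i \<noteq> n - 1\<close> i have i3: "i + 3 \<le> n" by auto
        define vs where "vs = drop i p"
        have lv: "length vs = n - i" using p vs_def by simp
        have "has_cycle (mset_set E)" unfolding has_cycle_def
        proof (intro exI[of _ vs] conjI allI impI)
          show "3 \<le> length vs" using lv i3 by simp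
          show "distinct vs" using p(1) unfolding vs_def ispath_def by simp
          fix j assume j: "j < length vs"
          show "{vs ! j, vs ! ((j + 1) mod length vs)} \<in># mset_set E"
          proof (cases "Suc j < length vs")
            case True
            then have "Suc (i + j) < length p" using lv p by simp
            then have "{p!(i+j), p!Suc (i+j)} \<in> E" using p(1) unfolding ispath_def by blast
            then show ?thesis using True memE p unfolding vs_def by simp
          next
            case False
            then have "j + 1 = length vs" using j by simp
            then have "(j+1) mod length vs = 0" "i + j = n - 1" using lv i3 by auto
            then show ?thesis using memE e y i p unfolding vs_def x_def by (simp add: insert_commute)
          qed
        qed
        then show ?thesis using nc by simp
      qed
    qed
  qed
  then have "\<exists>x'\<in>{u,x}. \<forall>e\<in>E. x' \<in> e \<longrightarrow> e = {u,x}" by blast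
  then show ?thesis using e0 by blast
qed



lemma arith1:
  fixes s a c j :: nat
  assumes h: "(j+2)*(j+1) \<le> 2*s + a*(a+1)" and ac: "a + c \<le> j+1" and c1: "c \<ge> 1" and sj: "s \<le> j+1"
  shows "c = 1 \<and> s = j+1"
proof -
  have c: "c = 1"
  proof (rule ccontr)
    assume "c \<noteq> 1"
    then have "c \<ge> 2" using c1 by simp
    then obtain i where j: "j = Suc i" and ai: "a \<le> i" using ac by (cases j) auto
    have "a*(a+1) \<le> i*(i+1)" using ai by (intro mult_le_mono) auto
    then show False using h sj unfolding j by (simp add: algebra_simps)
  qed
  have "a \<le> j" using ac c by simp
  then have "a*(a+1) \<le> j*(j+1)" by (intro mult_le_mono) auto
  then have "s = j+1" using h sj by (simp add: algebra_simps)
  with c show ?thesis by simp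
qed

lemma star_acyclic: "\<not> has_cycle (filter_mset (\<lambda>e. v \<in> e) G)"
proof
  assume "has_cycle (filter_mset (\<lambda>e. v \<in> e) G)"
  then obtain vs where n: "length vs \<ge> 3" and d: "distinct vs"
    and ed: "\<forall>i < length vs. {vs ! i, vs ! ((i + 1) mod length vs)} \<in># filter_mset (\<lambda>e. v \<in> e) G"
    unfolding has_cycle_def by blast
  define n where "n = length vs"
  have ed': "v = vs!i \<or> v = vs!((i+1) mod n)" if "i < n" for i
    using ed that unfolding n_def by auto
  have m1: "1 mod n = 1" and m2: "2 mod n = 2" using n n_def by auto
  have n0: "0 < n" "1 < n" "2 < n" using n n_def by auto
  have e0: "v = vs!0 \<or> v = vs!1" using ed'[OF n0(1)] m1 by simp
  have e1: "v = vs!1 \<or> v = vs!2" using ed'[OF n0(2)] by (simp only: one_add_one m2)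
  have e2: "v = vs!2 \<or> v = vs!(3 mod n)" using ed'[OF n0(3)] by simp
  have dd: "vs!i = vs!j \<Longrightarrow> i < n \<Longrightarrow> j < n \<Longrightarrow> i = j" for i j
    using d nth_eq_iff_index_eq unfolding n_def by blast
  have m3: "3 mod n \<noteq> 1"
  proof (cases "n = 3")
    case True then show ?thesis by simp
  next
    case False then show ?thesis using n n_def by simp
  qed
  have m3': "3 mod n < n" using n0 by simp
  show False
  proof (cases "v = vs!1")
    case True
    then have "vs!2 = vs!1 \<or> vs!(3 mod n) = vs!1" using e2 by auto
    then show False using dd[of 2 1] dd[of "3 mod n" 1] m3 m3' n0 by auto
  next
    case False
    then have "v = vs!2" "v = vs!0" using e0 e1 by auto
    then show False using dd[of 2 0] n0 by auto
  qed
qed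

lemma ext_acyclic:
  assumes nc: "\<not> has_cycle H" and vH: "\<forall>e\<in>#H. v \<notin> e" and uv: "u \<noteq> v"
  shows "\<not> has_cycle (H + replicate_mset m {v,u})"
proof
  assume "has_cycle (H + replicate_mset m {v,u})"
  then obtain vs where n: "length vs \<ge> 3" and d: "distinct vs"
    and ed: "\<forall>i < length vs. {vs ! i, vs ! ((i + 1) mod length vs)} \<in># H + replicate_mset m {v,u}"
    unfolding has_cycle_def by blast
  define n where "n = length vs"
  have dd: "vs!i = vs!j \<Longrightarrow> i < n \<Longrightarrow> j < n \<Longrightarrow> i = j" for i j
    using d nth_eq_iff_index_eq unfolding n_def by blast
  show False
  proof (cases "v \<in> set vs")
    case False
    have "\<forall>i < length vs. {vs ! i, vs ! ((i + 1) mod length vs)} \<in># H"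
    proof (intro allI impI)
      fix i assume i: "i < length vs"
      have "0 < length vs" using n by linarith
      then have "(i + 1) mod length vs < length vs" by simp
      then have "vs ! ((i + 1) mod length vs) \<in> set vs" by simp
      moreover have "vs ! i \<in> set vs" using i by simp
      ultimately have "v \<notin> {vs ! i, vs ! ((i + 1) mod length vs)}" using False by blast
      then have "{vs ! i, vs ! ((i + 1) mod length vs)} \<noteq> {v,u}" by blast
      then show "{vs ! i, vs ! ((i + 1) mod length vs)} \<in># H" using ed i
        by (auto split: if_splits)
    qed
    then have "has_cycle H" unfolding has_cycle_def using n d by blast
    then show False using nc by simp
  next
    case True
    then obtain i where i: "i < n" "vs!i = v" unfolding n_def by (auto simp: in_set_conv_nth)
    define i0 where "i0 = (if i = 0 then n - 1 else i - 1)"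
    define i1 where "i1 = (if i = n - 1 then 0 else i + 1)"
    have i0n: "i0 < n" and i1n: "i1 < n" using i n n_def unfolding i0_def i1_def by auto
    have i1e: "(i+1) mod n = i1"
    proof (cases "i = n - 1")
      case True
      then have "i + 1 = n" using n n_def by simp
      then show ?thesis using True unfolding i1_def by simp
    next
      case False
      then have "i + 1 < n" using i by simp
      then show ?thesis using False unfolding i1_def by simp
    qed
    have i0e: "(i0+1) mod n = i" using i n n_def unfolding i0_def by auto
    have ne: "i0 \<noteq> i1" using i n n_def unfolding i0_def i1_def by auto
    have "{vs!i, vs!i1} \<in># H + replicate_mset m {v,u}" using ed i i1e unfolding n_def by metis
    moreover have "{vs!i, vs!i1} \<notin># H" using vH i by auto
    ultimately have A: "{v, vs!i1} = {v,u}" using i by (auto split: if_splits)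
    have "{vs!i0, vs!i} \<in># H + replicate_mset m {v,u}" using ed i0n i0e unfolding n_def by metis
    moreover have "{vs!i0, vs!i} \<notin># H" using vH i by auto
    ultimately have B: "{vs!i0, v} = {v,u}" using i by (auto split: if_splits)
    have "vs!i1 \<noteq> v" using dd[of i1 i] i i1n i1e i n n_def unfolding i1_def by (auto split: if_splits)
    then have "vs!i1 = u" using A by (metis doubleton_eq_iff)
    moreover have "vs!i0 \<noteq> v" using dd[of i0 i] i i0n unfolding i0_def using n n_def by (auto split: if_splits)
    then have "vs!i0 = u" using B by (metis doubleton_eq_iff)
    ultimately show False using dd[of i0 i1] i0n i1n ne by simp
  qed
qed



lemma decomp1:
  shows "size (filter_mset (\<lambda>e. v \<in> e) G) \<le> ex_cycles G"
proof -
  have "filter_mset (\<lambda>e. v \<in> e) G \<subseteq># G" by (rule multiset_filter_subset)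
  moreover have "\<not> has_cycle (filter_mset (\<lambda>e. v \<in> e) G)" by (rule star_acyclic)
  ultimately show ?thesis by (rule ex_cycles_ge)
qed

lemma decomp2:
  assumes mg: "multigraph G" and e: "e \<in># G" "v \<in> e"
  shows "ex_cycles (filter_mset (\<lambda>e. v \<notin> e) G) + count G e \<le> ex_cycles G"
proof -
  define R where "R = filter_mset (\<lambda>e. v \<notin> e) G"
  obtain H where H: "H \<subseteq># R" "\<not> has_cycle H" "size H = ex_cycles R"
    using ex_cycles_obtain[of R] by blast
  have c2: "card e = 2" using mg e(1) unfolding multigraph_def by blast
  obtain u where u: "e = {v,u}" "u \<noteq> v" by (rule card2_obtain[OF c2 e(2)])
  define H' where "H' = H + replicate_mset (count G e) e"
  have sub: "H' \<subseteq># G"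
  proof (rule mset_subset_eqI)
    fix x
    have cx: "count H x \<le> count R x" using H(1) by (rule mset_subset_eq_count)
    show "count H' x \<le> count G x"
    proof (cases "x = e")
      case True
      then have "count R x = 0" using e(2) unfolding R_def by simp
      then show ?thesis using cx True unfolding H'_def by simp
    next
      case False
      have "count R x \<le> count G x" unfolding R_def by simp
      then show ?thesis using cx False unfolding H'_def by simp
    qed
  qed
  have vH: "\<forall>e'\<in>#H. v \<notin> e'"
  proof
    fix e' assume "e' \<in># H"
    then have "e' \<in># R" using H(1) by (simp add: mset_subset_eqD)
    then show "v \<notin> e'" unfolding R_def by simp
  qed
  have "\<not> has_cycle H'" unfolding H'_def u(1) by (rule ext_acyclic[OF H(2) vH u(2)])
  from ex_cycles_ge[OF sub this] have "size H' \<le> ex_cycles G" .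
  then show ?thesis using H(3) unfolding H'_def R_def by simp
qed

lemma split_size: "size G = size (filter_mset (\<lambda>e. v \<in> e) G) + size (filter_mset (\<lambda>e. v \<notin> e) G)"
proof -
  have "G = filter_mset (\<lambda>e. v \<in> e) G + filter_mset (\<lambda>e. \<not> (v \<in> e)) G" by (rule multiset_partition)
  then have "size G = size (filter_mset (\<lambda>e. v \<in> e) G + filter_mset (\<lambda>e. \<not> (v \<in> e)) G)" by (rule arg_cong)
  also have "\<dots> = size (filter_mset (\<lambda>e. v \<in> e) G) + size (filter_mset (\<lambda>e. v \<notin> e) G)" by (rule size_union)
  finally show ?thesis .
qed

lemma main_ineq: "multigraph G \<Longrightarrow> 2 * size G \<le> ex_cycles G * (ex_cycles G + 1)"
proof (induction "size G" arbitrary: G rule: less_induct)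
  case less
  show ?case
  proof (cases "G = {#}")
    case True then show ?thesis by simp
  next
    case False
    then obtain e where e: "e \<in># G" by blast
    have "card e = 2" using less.prems e unfolding multigraph_def by blast
    then obtain v where v: "v \<in> e" by (auto simp: card_2_iff)
    define R where "R = filter_mset (\<lambda>e. v \<notin> e) G"
    define S where "S = filter_mset (\<lambda>e. v \<in> e) G"
    have sz: "size G = size S + size R" unfolding S_def R_def by (rule split_size)
    have "e \<in># S" using e v unfolding S_def by simp
    then have "S \<noteq> {#}" by auto
    then have "size S \<noteq> 0" by simp
    then have "size S > 0" by linarith
    then have lt: "size R < size G" using sz by simp
    have mR: "multigraph R" using less.prems unfolding multigraph_def R_def by simp
    have IH: "2 * size R \<le> ex_cycles R * (ex_cycles R + 1)" using less.hyps[OF lt mR] .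
    have s: "size S \<le> ex_cycles G" unfolding S_def by (rule decomp1)
    have c: "ex_cycles R + count G e \<le> ex_cycles G" unfolding R_def by (rule decomp2[OF less.prems e v])
    have "count G e \<ge> 1" using e by (simp add: Suc_le_eq)
    then have a: "ex_cycles R + 1 \<le> ex_cycles G" using c by linarith
    define W where "W = ex_cycles G"
    define a where "a = ex_cycles R"
    have aW: "a + 1 \<le> W" using a unfolding W_def a_def .
    then obtain w where w: "W = Suc w" by (cases W) auto
    have "a * (a+1) \<le> w * (w+1)" using aW w by (intro mult_le_mono) auto
    then have "2 * size G \<le> 2 * W + w * (w+1)" using sz IH s unfolding W_def a_def by linarith
    also have "\<dots> = W * (W+1)" using w by (simp add: algebra_simps)
    finally show ?thesis unfolding W_def .
  qed
qed



lemma two_choose: "2 * (n choose 2) = n * (n - 1)"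
proof (induction n)
  case 0 then show ?case by simp
next
  case (Suc n)
  have "(Suc n) choose 2 = (n choose 1) + (n choose 2)"
    by (simp add: numeral_2_eq_2)
  then have "2 * ((Suc n) choose 2) = 2 * n + n * (n - 1)" using Suc by simp
  also have "\<dots> = Suc n * (Suc n - 1)" by (cases n) (auto simp: algebra_simps)
  finally show ?case .
qed

lemma size_bound:
  assumes "multigraph G" "ex_cycles G < k"
  shows "size G \<le> k choose 2"
proof -
  define W where "W = ex_cycles G"
  obtain j where k: "k = Suc j" using assms(2) by (cases k) auto
  have Wj: "W \<le> j" using assms(2) unfolding W_def k by simp
  have "W * (W + 1) \<le> j * (j+1)" using Wj by (intro mult_le_mono) auto
  moreover have "2 * size G \<le> W * (W+1)" unfolding W_def by (rule main_ineq[OF assms(1)])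
  moreover have "2 * (k choose 2) = k * (k - 1)" by (rule two_choose)
  ultimately show ?thesis unfolding k by (simp add: algebra_simps)
qed

lemma eq_local:
  assumes mg: "multigraph G" and ex: "ex_cycles G < k" and sz: "size G = k choose 2" and k2: "k \<ge> 2"
    and e: "e \<in># G" "v \<in> e"
  shows "count G e = 1 \<and> size (filter_mset (\<lambda>e. v \<in> e) G) = k - 1"
proof -
  obtain j where k: "k = j + 2" using k2 by (metis add.commute le_Suc_ex)
  define R where "R = filter_mset (\<lambda>e. v \<notin> e) G"
  define S where "S = filter_mset (\<lambda>e. v \<in> e) G"
  have szs: "size G = size S + size R" unfolding S_def R_def by (rule split_size)
  have mR: "multigraph R" using mg unfolding multigraph_def R_def by simp
  have IH: "2 * size R \<le> ex_cycles R * (ex_cycles R + 1)" by (rule main_ineq[OF mR])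
  have s: "size S \<le> ex_cycles G" unfolding S_def by (rule decomp1)
  have c: "ex_cycles R + count G e \<le> ex_cycles G" unfolding R_def by (rule decomp2[OF mg e])
  have c1: "count G e \<ge> 1" using e by (simp add: Suc_le_eq)
  have W: "ex_cycles G \<le> j + 1" using ex k by simp
  have "2 * size G = (j+2) * (j+1)" using two_choose[of k] sz k by simp
  then have h: "(j+2)*(j+1) \<le> 2 * size S + ex_cycles R * (ex_cycles R + 1)" using szs IH by linarith
  have "count G e = 1 \<and> size S = j + 1"
    by (rule arith1[OF h]) (use c W s c1 in linarith)+
  then show ?thesis unfolding S_def k by simp
qed

lemma double_count:
  assumes "finite V" "\<forall>e\<in>#G. e \<subseteq> V" "multigraph G"
  shows "(\<Sum>v\<in>V. size (filter_mset (\<lambda>e. v \<in> e) G)) = 2 * size G"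
  using assms(2,3)
proof (induction G)
  case empty then show ?case by simp
next
  case (add x G)
  have xV: "x \<subseteq> V" and c2: "card x = 2" using add.prems unfolding multigraph_def by auto
  have IH: "(\<Sum>v\<in>V. size (filter_mset (\<lambda>e. v \<in> e) G)) = 2 * size G"
    using add.prems by (intro add.IH) (auto simp: multigraph_def)
  have "(\<Sum>v\<in>V. size (filter_mset (\<lambda>e. v \<in> e) (add_mset x G)))
      = (\<Sum>v\<in>V. (if v \<in> x then 1 else 0) + size (filter_mset (\<lambda>e. v \<in> e) G))"
    by (intro sum.cong) auto
  also have "\<dots> = (\<Sum>v\<in>V. (if v \<in> x then 1 else 0)) + 2 * size G"
    by (simp add: sum.distrib IH)
  also have "(\<Sum>v\<in>V. (if v \<in> x then 1 else (0::nat))) = card (V \<inter> {v. v \<in> x})"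
    using assms(1) by (simp add: sum.If_cases)
  also have "V \<inter> {v. v \<in> x} = x" using xV by auto
  finally show ?case using c2 by simp
qed

lemma size_card: "(\<forall>x. count M x \<le> 1) \<Longrightarrow> size M = card (set_mset M)"
proof -
  assume h: "\<forall>x. count M x \<le> 1"
  have "M = mset_set (set_mset M)"
  proof (rule multiset_eqI)
    fix x show "count M x = count (mset_set (set_mset M)) x"
    proof (cases "x \<in># M")
      case True
      have "count M x > 0" using True by simp
      moreover have "count (mset_set (set_mset M)) x = 1" using True by simp
      ultimately show ?thesis using h[rule_format, of x] by linarith
    next
      case False then show ?thesis by (simp add: count_eq_zero_iff)
    qed
  qed
  then have "size M = size (mset_set (set_mset M))" by (rule arg_cong)
  then show ?thesis by simp
qed

lemma forest:
  assumes "finite E" "\<forall>e\<in>E. card e = 2" "\<not> has_cycle (mset_set E)" "E \<noteq> {}"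
  shows "card E < card (\<Union>E)"
  using assms
proof (induction "card E" arbitrary: E rule: less_induct)
  case less
  have finU: "finite (\<Union>E)" using less.prems by (intro finite_Union) (auto intro: card_ge_0_finite)
  obtain e0 x where e0: "e0 \<in> E" "x \<in> e0" and lf: "\<forall>e\<in>E. x \<in> e \<longrightarrow> e = e0"
    using leaf[OF less.prems] by blast
  define E' where "E' = E - {e0}"
  have "card E' = card E - 1" unfolding E'_def using e0(1) less.prems(1) by simp
  moreover have "card E > 0" using e0(1) less.prems(1) card_gt_0_iff by blast
  ultimately have cE: "card E = Suc (card E')" by linarith
  show ?case
  proof (cases "E' = {}")
    case True
    then have "E = {e0}" using e0 unfolding E'_def by blast
    then have "card E = 1" by simp
    moreover have "card e0 \<le> card (\<Union>E)" using e0(1) finU by (intro card_mono) auto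
    moreover have "card e0 = 2" using less.prems(2) e0(1) by blast
    ultimately show ?thesis by simp
  next
    case False
    have fE': "finite E'" using less.prems(1) unfolding E'_def by simp
    have c2': "\<forall>e\<in>E'. card e = 2" using less.prems(2) unfolding E'_def by simp
    have nc': "\<not> has_cycle (mset_set E')"
    proof
      assume "has_cycle (mset_set E')"
      moreover have "set_mset (mset_set E') \<subseteq> set_mset (mset_set E)"
        using fE' less.prems(1) unfolding E'_def by auto
      ultimately show False using less.prems(3) has_cycle_mono by blast
    qed
    have lt: "card E' < card E" using cE by simp
    have IH: "card E' < card (\<Union>E')" using less.hyps[OF lt fE' c2' nc' False] .
    have sub: "\<Union>E' \<subseteq> \<Union>E - {x}" using lf unfolding E'_def by auto
    have "x \<in> \<Union>E" using e0 by blast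
    then have "card (\<Union>E - {x}) = card (\<Union>E) - 1" using finU by simp
    moreover have "card (\<Union>E') \<le> card (\<Union>E - {x})" using sub finU by (intro card_mono) auto
    moreover have "card (\<Union>E) > 0" using \<open>x \<in> \<Union>E\<close> finU card_gt_0_iff by blast
    ultimately show ?thesis using IH cE by linarith
  qed
qed



definition Kg :: "nat \<Rightarrow> nat set multiset" where
  "Kg k = mset_set {e. e \<subseteq> {0..<k} \<and> card e = 2}"

lemma Ek_finite: "finite {e. e \<subseteq> {0..<(k::nat)} \<and> card e = 2}"
  by (rule finite_subset[of _ "Pow {0..<k}"]) auto

lemma Kg_mem: "e \<in># Kg k \<longleftrightarrow> e \<subseteq> {0..<k} \<and> card e = 2"
  unfolding Kg_def using Ek_finite by simp

lemma Kg_size: "size (Kg k) = k choose 2"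
proof -
  have "size (Kg k) = card {e. e \<subseteq> {0..<k} \<and> card e = 2}" unfolding Kg_def by simp
  also have "\<dots> = card {0..<k} choose 2" by (rule n_subsets) simp
  finally show ?thesis by simp
qed

lemma Kg_simple: "simple_graph (Kg k)"
  unfolding simple_graph_def multigraph_def
proof (intro conjI allI ballI)
  fix e assume "e \<in># Kg k" then show "card e = 2" using Kg_mem by blast
next
  fix e show "count (Kg k) e \<le> 1" unfolding Kg_def by (simp add: count_mset_set')
qed

lemma Kg_ex: assumes "k \<ge> 2" shows "ex_cycles (Kg k) < k"
proof -
  obtain H where H: "H \<subseteq># Kg k" "\<not> has_cycle H" "size H = ex_cycles (Kg k)"
    using ex_cycles_obtain[of "Kg k"] by blast
  show ?thesis
  proof (cases "H = {#}")
    case True then show ?thesis using H assms by simp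
  next
    case False
    have cnt: "\<forall>x. count H x \<le> 1"
    proof
      fix x
      have "count H x \<le> count (Kg k) x" using H(1) by (rule mset_subset_eq_count)
      also have "\<dots> \<le> 1" using Kg_simple unfolding simple_graph_def by blast
      finally show "count H x \<le> 1" .
    qed
    define E where "E = set_mset H"
    have fE: "finite E" unfolding E_def by simp
    have sub: "\<forall>e\<in>E. e \<subseteq> {0..<k} \<and> card e = 2"
    proof
      fix e assume "e \<in> E"
      then have "e \<in># Kg k" using H(1) unfolding E_def by (simp add: mset_subset_eqD)
      then show "e \<subseteq> {0..<k} \<and> card e = 2" using Kg_mem by blast
    qed
    have nc: "\<not> has_cycle (mset_set E)"
    proof
      assume "has_cycle (mset_set E)"
      moreover have "set_mset (mset_set E) \<subseteq> set_mset H" using fE unfolding E_def by simp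
      ultimately show False using H(2) has_cycle_mono by blast
    qed
    have ne: "E \<noteq> {}" using False unfolding E_def by simp
    have c2: "\<forall>e\<in>E. card e = 2" using sub by blast
    have "card E < card (\<Union>E)" by (rule forest[OF fE c2 nc ne])
    moreover have "card (\<Union>E) \<le> card {0..<k}" using sub by (intro card_mono) auto
    moreover have "size H = card E" unfolding E_def by (rule size_card[OF cnt])
    ultimately show ?thesis using H(3) by simp
  qed
qed

lemma complete:
  assumes mg: "multigraph G" and ex: "ex_cycles G < k" and sz: "size G = k choose 2" and k2: "k \<ge> 2"
  shows "is_complete_graph G k"
proof -
  define V where "V = verts G"
  have fin_e: "finite e" if "e \<in># G" for e
    using mg that unfolding multigraph_def by (intro card_ge_0_finite) auto
  have fV: "finite V" unfolding V_def verts_def using fin_e by (intro finite_Union) auto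
  have eV: "\<forall>e\<in>#G. e \<subseteq> V" unfolding V_def verts_def by auto
  have loc: "count G e = 1 \<and> size (filter_mset (\<lambda>e. v \<in> e) G) = k - 1" if "e \<in># G" "v \<in> e" for e v
    by (rule eq_local[OF mg ex sz k2 that])
  have deg: "size (filter_mset (\<lambda>e. v \<in> e) G) = k - 1" if "v \<in> V" for v
  proof -
    from that obtain e where "e \<in># G" "v \<in> e" unfolding V_def verts_def by auto
    then show ?thesis using loc by blast
  qed
  have cnt: "\<forall>x. count G x \<le> 1"
  proof
    fix x show "count G x \<le> 1"
    proof (cases "x \<in># G")
      case True
      then have "card x = 2" using mg unfolding multigraph_def by blast
      then obtain v where "v \<in> x" by (auto simp: card_2_iff)
      then show ?thesis using loc[OF True] by simp
    next
      case False then show ?thesis by (simp add: not_in_iff)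
    qed
  qed
  have "(\<Sum>v\<in>V. size (filter_mset (\<lambda>e. v \<in> e) G)) = 2 * size G"
    by (rule double_count[OF fV eV mg])
  moreover have "(\<Sum>v\<in>V. size (filter_mset (\<lambda>e. v \<in> e) G)) = card V * (k - 1)"
    using deg by simp
  moreover have "2 * size G = k * (k - 1)" using sz two_choose by simp
  ultimately have "card V * (k - 1) = k * (k - 1)" by simp
  moreover have "k - 1 > 0" using k2 by simp
  ultimately have cV: "card V = k" by simp
  have compl: "{u, v} \<in># G" if uv: "u \<in> V" "v \<in> V" "u \<noteq> v" for u v
  proof -
    define S where "S = filter_mset (\<lambda>e. v \<in> e) G"
    have cS: "\<forall>x. count S x \<le> 1"
    proof
      fix x
      have "count S x \<le> count G x" unfolding S_def by simp
      then show "count S x \<le> 1" using cnt[rule_format, of x] by linarith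
    qed
    have "card (set_mset S) = k - 1" using size_card[OF cS] deg[OF uv(2)] unfolding S_def by simp
    define B where "B = (\<lambda>w. {v, w}) ` (V - {v})"
    have fB: "finite B" unfolding B_def using fV by simp
    have cB: "card B \<le> k - 1"
    proof -
      have "card B \<le> card (V - {v})" unfolding B_def by (rule card_image_le) (use fV in simp)
      also have "\<dots> = k - 1" using cV uv(2) fV by simp
      finally show ?thesis .
    qed
    have SB: "set_mset S \<subseteq> B"
    proof
      fix e assume "e \<in> set_mset S"
      then have e: "e \<in># G" "v \<in> e" unfolding S_def by auto
      then have c2: "card e = 2" using mg unfolding multigraph_def by blast
      obtain w where w: "e = {v, w}" "w \<noteq> v" by (rule card2_obtain[OF c2 e(2)])
      have "w \<in> V" using eV e(1) w(1) by blast
      then show "e \<in> B" unfolding B_def using w by blast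
    qed
    have "set_mset S = B" by (rule card_seteq[OF fB SB]) (use cB \<open>card (set_mset S) = k - 1\<close> in linarith)
    moreover have "{v, u} \<in> B" unfolding B_def by (rule image_eqI[of _ _ u]) (use uv in auto)
    ultimately have "{v, u} \<in># S" by simp
    then show ?thesis unfolding S_def by (simp add: insert_commute)
  qed
  have "simple_graph G" unfolding simple_graph_def using mg cnt by blast
  moreover have "card (verts G) = k" using cV unfolding V_def .
  moreover have "\<forall>u\<in>verts G. \<forall>v\<in>verts G. u \<noteq> v \<longrightarrow> {u,v} \<in># G" using compl unfolding V_def by blast
  ultimately show ?thesis unfolding is_complete_graph_def by blast
qed

lemma bound_sup:
  assumes k2: "k \<ge> 2"
    and P: "\<And>G. P G \<Longrightarrow> multigraph G"
    and PK: "P (Kg k)"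
  shows "Sup {enat (size G) | G :: nat set multiset. P G \<and> ex_cycles G < k} = enat (k choose 2)"
proof (rule antisym)
  show "Sup {enat (size G) | G :: nat set multiset. P G \<and> ex_cycles G < k} \<le> enat (k choose 2)"
  proof (rule Sup_least)
    fix x assume "x \<in> {enat (size G) | G :: nat set multiset. P G \<and> ex_cycles G < k}"
    then obtain G :: "nat set multiset" where G: "x = enat (size G)" "P G" "ex_cycles G < k"
      unfolding mem_Collect_eq by metis
    have "size G \<le> k choose 2" by (rule size_bound[OF P[OF G(2)] G(3)])
    then show "x \<le> enat (k choose 2)" using G(1) by simp
  qed
next
  have "enat (size (Kg k)) \<in> {enat (size G) | G :: nat set multiset. P G \<and> ex_cycles G < k}"
    unfolding mem_Collect_eq using PK Kg_ex[OF k2] by metis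
  then have "enat (size (Kg k)) \<le> Sup {enat (size G) | G :: nat set multiset. P G \<and> ex_cycles G < k}"
    by (rule Sup_upper)
  then show "enat (k choose 2) \<le> Sup {enat (size G) | G :: nat set multiset. P G \<and> ex_cycles G < k}"
    using Kg_size by simp
qed

theorem theorem3p8:
  fixes k :: nat
  assumes "k \<ge> 2"
  shows "E_cyc k = enat (k choose 2) \<and> E_cyc_multi k = enat (k choose 2) \<and>
    (\<forall>G :: 'a set multiset. multigraph G \<and> ex_cycles G < k \<and> size G = k choose 2
        \<longrightarrow> is_complete_graph G k)"
proof (intro conjI allI impI)
  show "E_cyc k = enat (k choose 2)" unfolding E_cyc_def
    by (rule bound_sup[OF assms]) (use Kg_simple in \<open>auto simp: simple_graph_def\<close>)
  show "E_cyc_multi k = enat (k choose 2)" unfolding E_cyc_multi_def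
    by (rule bound_sup[OF assms]) (use Kg_simple in \<open>auto simp: simple_graph_def\<close>)
  fix G :: "'a set multiset"
  assume "multigraph G \<and> ex_cycles G < k \<and> size G = k choose 2"
  then show "is_complete_graph G k" using complete assms by blast
qed


end
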